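(* Let $(A\mid R)$ be a finite presentation. Then either $(A\mid R)$ is firstly irreducible, or there is a finite sequence of presentations $(A\mid R)\leadsto_1(A_1\mid R_1)\leadsto_1\cdots\leadsto_1(A_n\mid R_n)$ in which each step is one of the transformations (I)–(III) and $(A_n\mid R_n)$ is firstly irreducible.
   Context: $\mathbb{M}_A$ is the free magma on a non-empty set $A$ (non-associative words with $x+y=(x,y)$); $\mathbb{M}_A^2$ has componentwise operation. A finite presentation is $(A\mid R)$ with $A$ finite non-empty and $R\subseteq\mathbb{M}_A^2$ finite. $\mathcal{G}(\mathbb{M}_A^2)=(A\times\mathbb{M}_A)\cup(\mathbb{M}_A\times A)$. For $p\in\mathbb{M}_A^2$, $\mathbf{g}(p)=\mathbf{g}(p_1)\cup\mathbf{g}(p_2)$ if $p=p_1+p_2$ with $p_1,p_2\in\mathbb{M}_A^2$, and $\mathbf{g}(p)=\{p\}$ otherwise; $\mathbf{g}(S)=\bigcup_{p\in S}\mathbf{g}(p)$. The transformations are: (I) if some $(x,y)\in R$ is not in $\mathcal{G}(\mathbb{M}_A^2)$, replace $(A\mid R)$ by $(A\mid\mathbf{g}(R))$. (II) if $(a,y),(a,y')\in R\cap(A\times(\mathbb{M}_A\setminus A))$ with $y\neq y'$, replace by $(A\mid (R\setminus\{(a,y')\})\cup\mathbf{g}((y,y')))$. (III) if $(x,b),(x',b)\in R\cap((\mathbb{M}_A\setminus A)\times A)$ with $x\neq x'$, replace by $(A\mid (R\setminus\{(x',b)\})\cup\mathbf{g}((x,x')))$. A presentation is firstly irreducible if none of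 (I)–(III) is applicable; $\leadsto_1$ denotes application of one of (I)–(III). *)

theory Defs
  imports Main
begin

text \<open>The free magma: a non-associative word over generators of type 'a.
  The free magma M_A on a set A is the set of words all of whose generators lie in A.\<close>
datatype 'a magma = Gen 'a | Op "'a magma" "'a magma"

fun gens :: "'a magma \<Rightarrow> 'a set" where
  "gens (Gen a) = {a}"
| "gens (Op x y) = gens x \<union> gens y"

definition magma_on :: "'a set \<Rightarrow> 'a magma set" where
  "magma_on A = {t. gens t \<subseteq> A}"

type_synonym 'a presentation = "'a set \<times> ('a magma \<times> 'a magma) set"

definition finite_presentation :: "'a presentation \<Rightarrow> bool" where
  "finite_presentation P \<longleftrightarrow> finite (fst P) \<and> fst P \<noteq> {} \<and> finite (snd P)
      \<and> snd P \<subseteq> magma_on (fst P) \<times> magma_on (fst P)"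

definition Gpairs :: "'a set \<Rightarrow> ('a magma \<times> 'a magma) set" where
  "Gpairs A = (Gen ` A \<times> magma_on A) \<union> (magma_on A \<times> Gen ` A)"

fun gdec :: "('a magma \<times> 'a magma) \<Rightarrow> ('a magma \<times> 'a magma) set" where
  "gdec (Op x1 x2, Op y1 y2) = gdec (x1, y1) \<union> gdec (x2, y2)"
| "gdec p = {p}"

definition gset :: "('a magma \<times> 'a magma) set \<Rightarrow> ('a magma \<times> 'a magma) set" where
  "gset S = (\<Union>p\<in>S. gdec p)"

inductive step1 :: "'a presentation \<Rightarrow> 'a presentation \<Rightarrow> bool" where
  tI: "p \<in> R \<Longrightarrow> p \<notin> Gpairs A \<Longrightarrow> step1 (A, R) (A, gset R)"
| tII: "(Gen a, y) \<in> R \<Longrightarrow> (Gen a, y') \<in> R \<Longrightarrow> a \<in> A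
        \<Longrightarrow> y \<in> magma_on A - Gen ` A \<Longrightarrow> y' \<in> magma_on A - Gen ` A \<Longrightarrow> y \<noteq> y'
        \<Longrightarrow> step1 (A, R) (A, (R - {(Gen a, y')}) \<union> gdec (y, y'))"
| tIII: "(x, Gen b) \<in> R \<Longrightarrow> (x', Gen b) \<in> R \<Longrightarrow> b \<in> A
        \<Longrightarrow> x \<in> magma_on A - Gen ` A \<Longrightarrow> x' \<in> magma_on A - Gen ` A \<Longrightarrow> x \<noteq> x'
        \<Longrightarrow> step1 (A, R) (A, (R - {(x', Gen b)}) \<union> gdec (x, x'))"

definition firstly_irreducible :: "'a presentation \<Rightarrow> bool" where
  "firstly_irreducible P \<longleftrightarrow> \<not> (\<exists>Q. step1 P Q)"

end

theory Submission
  imports Defs "HOL-Library.Multiset"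
begin

definition mm :: "'a magma \<times> 'a magma \<Rightarrow> nat" where
  "mm p = max (size (fst p)) (size (snd p))"

definition mu :: "('a magma \<times> 'a magma) set \<Rightarrow> nat multiset" where
  "mu R = image_mset mm (mset_set R)"

definition good :: "'a set \<Rightarrow> ('a magma \<times> 'a magma) set \<Rightarrow> bool" where
  "good A R \<longleftrightarrow> finite R \<and> R \<subseteq> Gpairs A"

lemma gdec_size: "s \<in> gdec p \<Longrightarrow> size (fst s) \<le> size (fst p) \<and> size (snd s) \<le> size (snd p)"
  by (induction p rule: gdec.induct) fastforce+

lemma gdec_finite: "finite (gdec p)"
  by (induction p rule: gdec.induct) auto

lemma gdec_Op: "s \<in> gdec (Op a b, Op c d) \<Longrightarrow> mm s < max (size (Op a b)) (size (Op c d))"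
  using gdec_size[of s "(a,c)"] gdec_size[of s "(b,d)"] by (auto simp: mm_def)

lemma gdec_G: "x \<in> magma_on A \<Longrightarrow> y \<in> magma_on A \<Longrightarrow> s \<in> gdec (x,y) \<Longrightarrow> s \<in> Gpairs A"
proof (induction "(x,y)" arbitrary: x y rule: gdec.induct)
  case (1 x1 x2 y1 y2)
  then show ?case by (auto simp: magma_on_def)
qed (auto simp: Gpairs_def magma_on_def)

lemma notGen: "y \<in> magma_on A - Gen ` A \<Longrightarrow> \<exists>a b. y = Op a b"
  by (cases y) (auto simp: magma_on_def)

lemma Gpairs_sub: "Gpairs A \<subseteq> magma_on A \<times> magma_on A"
  by (auto simp: Gpairs_def magma_on_def)

lemma dec:
  assumes "finite R" "q \<in> R" "finite S" "\<forall>s\<in>S. mm s < mm q"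
  shows "(mu ((R - {q}) \<union> S), mu R) \<in> mult less_than"
proof -
  define I0 where "I0 = R - {q}"
  define K0 where "K0 = S - I0"
  have e1: "(R - {q}) \<union> S = I0 \<union> K0" by (auto simp: I0_def K0_def)
  have e2: "R = I0 \<union> {q}" using assms(2) by (auto simp: I0_def)
  have m1: "mset_set (I0 \<union> K0) = mset_set I0 + mset_set K0"
    by (rule mset_set_Union) (use assms in \<open>auto simp: I0_def K0_def\<close>)
  have m2: "mset_set (I0 \<union> {q}) = mset_set I0 + {#q#}"
    using mset_set_Union[of I0 "{q}"] assms by (auto simp: I0_def)
  have "(image_mset mm (mset_set I0) + image_mset mm (mset_set K0),
         image_mset mm (mset_set I0) + {#mm q#}) \<in> mult less_than"
    by (rule one_step_implies_mult) (use assms in \<open>auto simp: K0_def\<close>)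
  then show ?thesis unfolding mu_def e1 m1 by (subst e2, subst m2) simp
qed

definition chain :: "'a presentation \<Rightarrow> bool" where
  "chain P \<longleftrightarrow> (\<exists>(n::nat) (Ps :: nat \<Rightarrow> 'a presentation). Ps 0 = P
            \<and> (\<forall>i<n. step1 (Ps i) (Ps (Suc i))) \<and> firstly_irreducible (Ps n))"

lemma chain_cons: "step1 P Q \<Longrightarrow> chain Q \<Longrightarrow> (\<exists>(n::nat) (Ps :: nat \<Rightarrow> 'a presentation). n \<ge> 1 \<and> Ps 0 = P
            \<and> (\<forall>i<n. step1 (Ps i) (Ps (Suc i))) \<and> firstly_irreducible (Ps n))"
proof -
  assume s: "step1 P Q" and "chain Q"
  then obtain n Ps where h: "Ps 0 = Q" "\<forall>i<n. step1 (Ps i) (Ps (Suc i))" "firstly_irreducible (Ps n)"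
    unfolding chain_def by blast
  define Qs where "Qs = (\<lambda>i. if i = 0 then P else Ps (i - 1))"
  have "\<forall>i<Suc n. step1 (Qs i) (Qs (Suc i))"
  proof (intro allI impI)
    fix i assume "i < Suc n"
    then show "step1 (Qs i) (Qs (Suc i))"
      using s h by (cases i) (auto simp: Qs_def)
  qed
  moreover have "firstly_irreducible (Qs (Suc n))" using h by (simp add: Qs_def)
  ultimately show ?thesis by (intro exI[of _ "Suc n"] exI[of _ Qs]) (simp add: Qs_def)
qed

lemma chain_cons': "step1 P Q \<Longrightarrow> chain Q \<Longrightarrow> chain P"
  using chain_cons unfolding chain_def by blast

lemma good_chain: "good A R \<Longrightarrow> chain (A, R)"
proof (induction R rule: wf_induct[OF wf_inv_image[OF wf_mult[OF wf_less_than], of mu]])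
  case (1 R)
  show ?case
  proof (cases "firstly_irreducible (A, R)")
    case True
    then show ?thesis unfolding chain_def by (intro exI[of _ 0] exI[of _ "\<lambda>_. (A,R)"]) simp
  next
    case False
    then obtain Q where "step1 (A, R) Q" unfolding firstly_irreducible_def by blast
    then show ?thesis
    proof (cases rule: step1.cases)
      case (tI p)
      then show ?thesis using "1.prems" by (auto simp: good_def)
    next
      case (tII a y y')
      have key: "chain (A, R)" if
        h: "(Gen a, u) \<in> R" "(Gen a, v) \<in> R" "a \<in> A" "u \<in> magma_on A - Gen ` A"
           "v \<in> magma_on A - Gen ` A" "u \<noteq> v" "size u \<le> size v" for u v
      proof -
        define R' where "R' = (R - {(Gen a, v)}) \<union> gdec (u, v)"
        have st: "step1 (A, R) (A, R')" unfolding R'_def by (rule step1.tII[OF h(1-6)])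
        obtain u1 u2 where u: "u = Op u1 u2" using notGen[OF h(4)] by blast
        obtain v1 v2 where v: "v = Op v1 v2" using notGen[OF h(5)] by blast
        have lt: "\<forall>s\<in>gdec (u,v). mm s < mm (Gen a, v)"
          using gdec_Op[of _ u1 u2 v1 v2] h(7) u v by (auto simp: mm_def)
        have fin: "finite R" using "1.prems" by (simp add: good_def)
        have "(mu R', mu R) \<in> mult less_than"
          unfolding R'_def by (rule dec[OF fin h(2) gdec_finite lt])
        moreover have "good A R'"
          using "1.prems" gdec_G[of u A v] h(4,5) gdec_finite by (auto simp: good_def R'_def)
        ultimately have "chain (A, R')" using "1.IH" by simp
        then show ?thesis using chain_cons' st by blast
      qed
      show ?thesis
      proof (cases "size y \<le> size y'")
        case True
        then show ?thesis using key tII by blast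
      next
        case False
        then show ?thesis using key[of y' y] tII by auto
      qed
    next
      case (tIII x b x')
      have key: "chain (A, R)" if
        h: "(u, Gen b) \<in> R" "(v, Gen b) \<in> R" "b \<in> A" "u \<in> magma_on A - Gen ` A"
           "v \<in> magma_on A - Gen ` A" "u \<noteq> v" "size u \<le> size v" for u v
      proof -
        define R' where "R' = (R - {(v, Gen b)}) \<union> gdec (u, v)"
        have st: "step1 (A, R) (A, R')" unfolding R'_def by (rule step1.tIII[OF h(1-6)])
        obtain u1 u2 where u: "u = Op u1 u2" using notGen[OF h(4)] by blast
        obtain v1 v2 where v: "v = Op v1 v2" using notGen[OF h(5)] by blast
        have lt: "\<forall>s\<in>gdec (u,v). mm s < mm (v, Gen b)"
          using gdec_Op[of _ u1 u2 v1 v2] h(7) u v by (auto simp: mm_def)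
        have fin: "finite R" using "1.prems" by (simp add: good_def)
        have "(mu R', mu R) \<in> mult less_than"
          unfolding R'_def by (rule dec[OF fin h(2) gdec_finite lt])
        moreover have "good A R'"
          using "1.prems" gdec_G[of u A v] h(4,5) gdec_finite by (auto simp: good_def R'_def)
        ultimately have "chain (A, R')" using "1.IH" by simp
        then show ?thesis using chain_cons' st by blast
      qed
      show ?thesis
      proof (cases "size x \<le> size x'")
        case True
        then show ?thesis using key tIII by blast
      next
        case False
        then show ?thesis using key[of x' x] tIII by auto
      qed
    qed
  qed
qed

theorem lemma7p9:
  fixes P :: "'a presentation"
  assumes "finite_presentation P"
  shows "firstly_irreducible P \<or>
         (\<exists>(n::nat) (Ps :: nat \<Rightarrow> 'a presentation). n \<ge> 1 \<and> Ps 0 = P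
            \<and> (\<forall>i<n. step1 (Ps i) (Ps (Suc i))) \<and> firstly_irreducible (Ps n))"
proof -
  obtain A R where P: "P = (A, R)" by (cases P)
  have fR: "finite R" and sub: "R \<subseteq> magma_on A \<times> magma_on A"
    using assms by (auto simp: finite_presentation_def P)
  show ?thesis
  proof (cases "R \<subseteq> Gpairs A")
    case True
    then have "chain (A, R)" using good_chain fR by (auto simp: good_def)
    then obtain n Ps where h: "Ps 0 = (A, R)" "\<forall>i<n. step1 (Ps i) (Ps (Suc i))" "firstly_irreducible (Ps n)"
      unfolding chain_def by blast
    show ?thesis
    proof (cases "n = 0")
      case True
      then show ?thesis using h P by simp
    next
      case False
      then show ?thesis using h P by (intro disjI2 exI[of _ n] exI[of _ Ps]) auto
    qed
  next
    case False
    then obtain p where p: "p \<in> R" "p \<notin> Gpairs A" by blast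
    have st: "step1 (A, R) (A, gset R)" by (rule step1.tI[OF p])
    have "good A (gset R)"
      unfolding good_def gset_def
    proof
      show "finite (\<Union>p\<in>R. gdec p)" using fR gdec_finite by blast
      show "(\<Union>p\<in>R. gdec p) \<subseteq> Gpairs A"
        using sub gdec_G by fastforce
    qed
    then have "chain (A, gset R)" by (rule good_chain)
    then show ?thesis using chain_cons[OF st] P by blast
  qed
qed

end
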